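(* Let $(\Delta,\mathcal H)$ be a generic cut with associated simplicial complexes $K_\Delta,K_+,K_-$ on $\widetilde{[m]}=[m]\cup\{o\}$. Then $K_\Delta$ is the strong connected sum $K_+\#^ZK_-$, where $Z=O_{K_+\cup K_-}(o)$.
   Context: Let $\Delta\subset\mathbb R^n$ be an $n$-dimensional simple polytope $\Delta=\{x:\langle x,\lambda_i\rangle+\eta_i\ge0,\ i=1,\dots,m\}$ whose facets $H_i=\Delta\cap\{\langle x,\lambda_i\rangle+\eta_i=0\}$ are all nonempty. A generic cut is a hyperplane $\mathcal H=\{\langle x,\lambda_0\rangle+\xi=0\}$ in general position with the hyperplanes $\{\langle x,\lambda_i\rangle+\eta_i=0\}$ and with $H_o:=\mathcal H\cap\Delta\neq\varnothing$. Set $\Delta_\pm=\Delta\cap\{\pm(\langle x,\lambda_0\rangle+\xi)\ge0\}$, $K_\Delta=\{\sigma\subset[m]:\bigcap_{i\in\sigma}H_i\ne\varnothing\}\cup\{\varnothing\}$, $K_\pm=\{\sigma\subset\widetilde{[m]}:\bigcap_{i\in\sigma}(H_i\cap\Delta_\pm)\ne\varnothing\}\cup\{\varnothing\}$. Simplicial-complex notation: for $Z\subset K$, $\overline Z$ is the smallest subcomplex containing $Z$; $O_K(Z)=\{\sigma\in K:\sigma\supseteq\tau$ for some $\tau\in Z\}$; $O_K(o)=O_K(\{\{o\}\})$; $\operatorname{Del}_Z(K)=K\setminus O_K(Z)$. A complex is pure if all maximal faces have the same dimension. Connected sum: for simplicial complexes $K_1,K_2$ on the same vertex set and $Z\subset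 K_1\cap K_2$ with $\varnothing\notin Z$ and $O_{K_1\cup K_2}(Z)\subset K_1\cap K_2$, $K_1\#^ZK_2:=\operatorname{Del}_Z(K_1\cup K_2)$. It is strong if $K_1,K_2,W:=K_1\cap K_2$ are pure of the same dimension and $Z=W\setminus\overline{K_1\setminus W}=W\setminus\overline{K_2\setminus W}$. *)

theory Defs
  imports "HOL-Analysis.Analysis"
begin

text \<open>Conventions: the index set [m] is {1..m}; the extra vertex o is the index 0,
  so the extended vertex set is {0..m}.  The polytope is given by normals lam i and
  constants eta i for i in {1..m}; the cut hyperplane is given by lam 0 and eta 0
  (i.e. lambda_0 and xi).\<close>

definition Poly :: "nat \<Rightarrow> (nat \<Rightarrow> 'a::euclidean_space) \<Rightarrow> (nat \<Rightarrow> real) \<Rightarrow> 'a set" where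
  "Poly m lam eta = {x. \<forall>i\<in>{1..m}. x \<bullet> lam i + eta i \<ge> 0}"

definition Hyp :: "(nat \<Rightarrow> 'a::euclidean_space) \<Rightarrow> (nat \<Rightarrow> real) \<Rightarrow> nat \<Rightarrow> 'a set" where
  "Hyp lam eta i = {x. x \<bullet> lam i + eta i = 0}"

definition Facet :: "nat \<Rightarrow> (nat \<Rightarrow> 'a::euclidean_space) \<Rightarrow> (nat \<Rightarrow> real) \<Rightarrow> nat \<Rightarrow> 'a set" where
  "Facet m lam eta i = Poly m lam eta \<inter> Hyp lam eta i"

definition simple_polytope :: "nat \<Rightarrow> (nat \<Rightarrow> 'a::euclidean_space) \<Rightarrow> (nat \<Rightarrow> real) \<Rightarrow> bool" where
  "simple_polytope m lam eta \<longleftrightarrow>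
     polytope (Poly m lam eta) \<and> aff_dim (Poly m lam eta) = int DIM('a) \<and>
     (\<forall>v. v extreme_point_of (Poly m lam eta) \<longrightarrow>
          card {i\<in>{1..m}. v \<in> Facet m lam eta i} = DIM('a)) \<and>
     (\<forall>i\<in>{1..m}. Facet m lam eta i \<noteq> {})"

definition generic_cut :: "nat \<Rightarrow> (nat \<Rightarrow> 'a::euclidean_space) \<Rightarrow> (nat \<Rightarrow> real) \<Rightarrow> bool" where
  "generic_cut m lam eta \<longleftrightarrow>
     (\<forall>\<sigma>. \<sigma> \<subseteq> {1..m} \<longrightarrow>
        (let L = (\<Inter>i\<in>\<sigma>. Hyp lam eta i) in
          L \<noteq> {} \<longrightarrow> (Hyp lam eta 0 \<inter> L = {} \<or> aff_dim (Hyp lam eta 0 \<inter> L) = aff_dim L - 1))) \<and>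
     Facet m lam eta 0 \<noteq> {}"

text \<open>Delta_+ (s = 1) and Delta_- (s = -1).\<close>
definition Half :: "nat \<Rightarrow> (nat \<Rightarrow> 'a::euclidean_space) \<Rightarrow> (nat \<Rightarrow> real) \<Rightarrow> real \<Rightarrow> 'a set" where
  "Half m lam eta s = Poly m lam eta \<inter> {x. s * (x \<bullet> lam 0 + eta 0) \<ge> 0}"

definition K_Delta :: "nat \<Rightarrow> (nat \<Rightarrow> 'a::euclidean_space) \<Rightarrow> (nat \<Rightarrow> real) \<Rightarrow> nat set set" where
  "K_Delta m lam eta = {\<sigma>. \<sigma> \<subseteq> {1..m} \<and> (\<Inter>i\<in>\<sigma>. Facet m lam eta i) \<noteq> {}} \<union> {{}}"

definition K_half :: "nat \<Rightarrow> (nat \<Rightarrow> 'a::euclidean_space) \<Rightarrow> (nat \<Rightarrow> real) \<Rightarrow> real \<Rightarrow> nat set set" where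
  "K_half m lam eta s = {\<sigma>. \<sigma> \<subseteq> {0..m} \<and> (\<Inter>i\<in>\<sigma>. Facet m lam eta i \<inter> Half m lam eta s) \<noteq> {}} \<union> {{}}"

definition simplicial_complex :: "'v set \<Rightarrow> 'v set set \<Rightarrow> bool" where
  "simplicial_complex V K \<longleftrightarrow> finite V \<and> {} \<in> K \<and> (\<forall>\<sigma>\<in>K. \<sigma> \<subseteq> V) \<and>
     (\<forall>\<sigma>\<in>K. \<forall>\<tau>. \<tau> \<subseteq> \<sigma> \<longrightarrow> \<tau> \<in> K)"

definition sc_closure :: "'v set set \<Rightarrow> 'v set set" where
  "sc_closure Z = {\<tau>. \<exists>\<sigma>\<in>Z. \<tau> \<subseteq> \<sigma>}"

definition sc_O :: "'v set set \<Rightarrow> 'v set set \<Rightarrow> 'v set set" where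
  "sc_O K Z = {\<sigma>\<in>K. \<exists>\<tau>\<in>Z. \<tau> \<subseteq> \<sigma>}"

definition sc_Del :: "'v set set \<Rightarrow> 'v set set \<Rightarrow> 'v set set" where
  "sc_Del Z K = K - sc_O K Z"

definition maximal_face :: "'v set set \<Rightarrow> 'v set \<Rightarrow> bool" where
  "maximal_face K \<sigma> \<longleftrightarrow> \<sigma> \<in> K \<and> \<not> (\<exists>\<tau>\<in>K. \<sigma> \<subset> \<tau>)"

text \<open>pure of dimension d - 1: all maximal faces have d vertices\<close>
definition pure_card :: "'v set set \<Rightarrow> nat \<Rightarrow> bool" where
  "pure_card K d \<longleftrightarrow> (\<forall>\<sigma>. maximal_face K \<sigma> \<longrightarrow> card \<sigma> = d)"

definition connected_sum :: "'v set set \<Rightarrow> 'v set set \<Rightarrow> 'v set set \<Rightarrow> 'v set set" where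
  "connected_sum K1 Z K2 = sc_Del Z (K1 \<union> K2)"

definition connected_sum_defined :: "'v set \<Rightarrow> 'v set set \<Rightarrow> 'v set set \<Rightarrow> 'v set set \<Rightarrow> bool" where
  "connected_sum_defined V K1 Z K2 \<longleftrightarrow>
     simplicial_complex V K1 \<and> simplicial_complex V K2 \<and>
     Z \<subseteq> K1 \<inter> K2 \<and> {} \<notin> Z \<and> sc_O (K1 \<union> K2) Z \<subseteq> K1 \<inter> K2"

definition strong_connected_sum :: "'v set \<Rightarrow> 'v set set \<Rightarrow> 'v set set \<Rightarrow> 'v set set \<Rightarrow> bool" where
  "strong_connected_sum V K1 Z K2 \<longleftrightarrow>
     connected_sum_defined V K1 Z K2 \<and>
     (let W = K1 \<inter> K2 in
       (\<exists>d. pure_card K1 d \<and> pure_card K2 d \<and> pure_card W d) \<and>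
       Z = W - sc_closure (K1 - W) \<and> Z = W - sc_closure (K2 - W))"

end

theory Submission
  imports Defs "HOL-Analysis.Analysis"
begin


definition Qs :: "nat set \<Rightarrow> (nat \<Rightarrow> 'a::euclidean_space) \<Rightarrow> (nat \<Rightarrow> real) \<Rightarrow> (nat \<Rightarrow> real) \<Rightarrow> 'a set" where
  "Qs J lam eta c = {y. \<forall>j\<in>J. 0 \<le> c j * (y \<bullet> lam j + eta j)}"

lemma affine_comb: "((1 - u) *\<^sub>R a + u *\<^sub>R b) \<bullet> l + e = (1-u) * (a \<bullet> l + e) + u * (b \<bullet> l + e)"
  by (simp add: inner_add_left algebra_simps)

lemma L0:
  fixes a b :: "'a::euclidean_space"
  assumes "0 \<le> c * (a \<bullet> l + e)" "0 \<le> c * (b \<bullet> l + e)" "c \<noteq> 0" "0 < u" "u < 1"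
    "((1 - u) *\<^sub>R a + u *\<^sub>R b) \<bullet> l + e = 0"
  shows "a \<bullet> l + e = 0 \<and> b \<bullet> l + e = 0"
proof -
  define p where "p = c * (a \<bullet> l + e)"
  define q where "q = c * (b \<bullet> l + e)"
  have "(1-u) * p + u * q = 0" using assms(6) unfolding affine_comb p_def q_def
    by (metis (no_types, opaque_lifting) distrib_left mult.left_commute mult_zero_right)
  moreover have "0 \<le> (1-u)*p" "0 \<le> u*q" using assms by (auto simp: p_def q_def)
  ultimately have "(1-u)*p = 0" "u*q = 0" by linarith+
  hence "p = 0" "q = 0" using assms by auto
  thus ?thesis using assms(3) by (auto simp: p_def q_def)
qed

lemma Qs_closed: "closed (Qs J lam eta c)"
proof -
  have "Qs J lam eta c = (\<Inter>j\<in>J. {y. 0 \<le> c j * (y \<bullet> lam j + eta j)})" by (auto simp: Qs_def)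
  moreover have "closed {y. 0 \<le> c j * (y \<bullet> lam j + eta j)}" for j
    by (intro closed_Collect_le continuous_intros)
  ultimately show ?thesis by auto
qed

lemma Qs_convex: "convex (Qs J lam eta c)"
proof -
  have eq: "(0 \<le> c j*(y \<bullet> lam j + eta j)) = (-(c j*eta j) \<le> (c j *\<^sub>R lam j) \<bullet> y)" for y j
    by (simp add: distrib_left inner_commute) linarith
  have "Qs J lam eta c = (\<Inter>j\<in>J. {y. (c j *\<^sub>R lam j) \<bullet> y \<ge> - (c j * eta j)})"
    by (auto simp: Qs_def eq)
  moreover have "convex {y. (c j *\<^sub>R lam j) \<bullet> y \<ge> - (c j * eta j)}" for j
    by (rule convex_halfspace_ge)
  ultimately show ?thesis by (auto intro!: convex_INT)
qed

lemma Hyp_closed: "closed (Hyp lam eta j)"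
  unfolding Hyp_def by (intro closed_Collect_eq continuous_intros)

lemma Hyp_convex: "convex (Hyp lam eta j)"
proof -
  have "Hyp lam eta j = {y. lam j \<bullet> y = - eta j}" by (auto simp: Hyp_def inner_commute)
  thus ?thesis by (simp add: convex_hyperplane)
qed

lemma L1:
  assumes "finite J" "\<forall>j\<in>J. c j \<noteq> 0" "x extreme_point_of Qs J lam eta c"
  shows "span (lam ` {j\<in>J. x \<bullet> lam j + eta j = 0}) = UNIV"
proof (rule ccontr)
  let ?S = "lam ` {j\<in>J. x \<bullet> lam j + eta j = 0}"
  assume "span ?S \<noteq> UNIV"
  then obtain d where d: "d \<noteq> 0" "\<forall>v\<in>span ?S. d \<bullet> v = 0" using span_not_UNIV_orthogonal by blast
  have xQ: "x \<in> Qs J lam eta c" using assms(3) by (simp add: extreme_point_of_def)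
  let ?I = "{j\<in>J. x \<bullet> lam j + eta j \<noteq> 0}"
  have "\<forall>j\<in>?I. eventually (\<lambda>t. 0 < c j * ((x + t *\<^sub>R d) \<bullet> lam j + eta j)) (at (0::real))"
  proof
    fix j assume j: "j \<in> ?I"
    have pos: "0 < c j * (x \<bullet> lam j + eta j)" using j xQ assms(2) unfolding Qs_def
      by (metis (mono_tags, lifting) less_eq_real_def mem_Collect_eq mult_eq_0_iff)
    have "((\<lambda>t. c j * (x \<bullet> lam j + eta j) + t * (c j * (d \<bullet> lam j))) \<longlongrightarrow>
        c j * (x \<bullet> lam j + eta j) + 0 * (c j * (d \<bullet> lam j))) (at (0::real))"
      by (intro tendsto_intros)
    hence "eventually (\<lambda>t. 0 < c j * (x \<bullet> lam j + eta j) + t * (c j * (d \<bullet> lam j))) (at (0::real))"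
      using pos by (intro order_tendstoD(1)) auto
    thus "eventually (\<lambda>t. 0 < c j * ((x + t *\<^sub>R d) \<bullet> lam j + eta j)) (at (0::real))"
      by (simp add: inner_add_left algebra_simps)
  qed
  hence "eventually (\<lambda>t. \<forall>j\<in>?I. 0 < c j * ((x + t *\<^sub>R d) \<bullet> lam j + eta j)) (at (0::real))"
    using assms(1) by (intro eventually_ball_finite) auto
  then obtain e where e: "e > 0" "\<And>t. t \<noteq> 0 \<Longrightarrow> dist t 0 < e \<Longrightarrow> \<forall>j\<in>?I. 0 < c j * ((x + t *\<^sub>R d) \<bullet> lam j + eta j)"
    unfolding eventually_at by auto
  have inQ: "x + t *\<^sub>R d \<in> Qs J lam eta c" if "t \<noteq> 0" "\<bar>t\<bar> < e" for t
    unfolding Qs_def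
  proof (intro CollectI ballI)
    fix j assume "j \<in> J"
    show "0 \<le> c j * ((x + t *\<^sub>R d) \<bullet> lam j + eta j)"
    proof (cases "x \<bullet> lam j + eta j = 0")
      case True
      hence "lam j \<in> span ?S" using \<open>j \<in> J\<close> by (intro span_base) auto
      hence "d \<bullet> lam j = 0" using d by auto
      thus ?thesis using True by (simp add: inner_add_left)
    next
      case False
      thus ?thesis using e(2)[of t] that \<open>j \<in> J\<close> by (auto intro: less_imp_le)
    qed
  qed
  have a: "x + (e/2) *\<^sub>R d \<in> Qs J lam eta c" using e by (intro inQ) auto
  have b: "x + (-e/2) *\<^sub>R d \<in> Qs J lam eta c" using e by (intro inQ) auto
  have "x \<in> open_segment (x + (-e/2) *\<^sub>R d) (x + (e/2) *\<^sub>R d)"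
    unfolding in_segment
  proof
    show "x + (- e / 2) *\<^sub>R d \<noteq> x + (e / 2) *\<^sub>R d"
    proof
      assume h: "x + (- e / 2) *\<^sub>R d = x + (e / 2) *\<^sub>R d"
      have "(e/2 - (-e/2)) *\<^sub>R d = (e/2) *\<^sub>R d - (-e/2) *\<^sub>R d" by (rule scaleR_left_diff_distrib)
      also have "\<dots> = 0" using h by simp
      finally show False using d e by simp
    qed
    show "\<exists>u>0. u < 1 \<and> x = (1 - u) *\<^sub>R (x + (- e / 2) *\<^sub>R d) + u *\<^sub>R (x + (e / 2) *\<^sub>R d)"
    proof (rule exI[of _ "1/2"])
      have h: "(1/2::real) *\<^sub>R x + (1/2) *\<^sub>R x = x" by (simp flip: scaleR_add_left)
      show "1/2 > (0::real) \<and> 1/2 < (1::real) \<and> x = (1 - 1/2) *\<^sub>R (x + (- e / 2) *\<^sub>R d) + (1/2) *\<^sub>R (x + (e / 2) *\<^sub>R d)"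
        using h by (auto simp: algebra_simps)
    qed
  qed
  thus False using assms(3) a b by (auto simp: extreme_point_of_def)
qed

lemma L2:
  assumes "\<forall>j\<in>J. c j \<noteq> 0" "x \<in> Qs J lam eta c"
    "span (lam ` {j\<in>J. x \<bullet> lam j + eta j = 0}) = UNIV"
  shows "x extreme_point_of Qs J lam eta c"
  unfolding extreme_point_of_def
proof (intro conjI assms ballI notI)
  fix a b assume a: "a \<in> Qs J lam eta c" and b: "b \<in> Qs J lam eta c" and "x \<in> open_segment a b"
  then obtain u where u: "a \<noteq> b" "0 < u" "u < 1" "x = (1 - u) *\<^sub>R a + u *\<^sub>R b"
    unfolding in_segment by auto
  have "\<forall>v\<in>lam ` {j\<in>J. x \<bullet> lam j + eta j = 0}. orthogonal (a - b) v"
  proof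
    fix v assume "v \<in> lam ` {j\<in>J. x \<bullet> lam j + eta j = 0}"
    then obtain j where j: "j \<in> J" "x \<bullet> lam j + eta j = 0" "v = lam j" by auto
    have h1: "0 \<le> c j * (a \<bullet> lam j + eta j)" using a j(1) by (simp add: Qs_def)
    have h2: "0 \<le> c j * (b \<bullet> lam j + eta j)" using b j(1) by (simp add: Qs_def)
    have h3: "c j \<noteq> 0" using assms(1) j(1) by blast
    have h4: "((1 - u) *\<^sub>R a + u *\<^sub>R b) \<bullet> lam j + eta j = 0" using j(2) u(4) by simp
    have "a \<bullet> lam j + eta j = 0 \<and> b \<bullet> lam j + eta j = 0"
      by (rule L0[OF h1 h2 h3 u(2) u(3) h4])
    thus "orthogonal (a - b) v" using j by (auto simp: orthogonal_def inner_diff_left)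
  qed
  hence orth: "\<And>y. y \<in> lam ` {j\<in>J. x \<bullet> lam j + eta j = 0} \<Longrightarrow> orthogonal (a - b) y" by blast
  have "orthogonal (a - b) (a - b)" by (rule orthogonal_to_span[where S="lam ` {j\<in>J. x \<bullet> lam j + eta j = 0}", OF _ orth]) (simp add: assms(3))
  thus False using u by (simp add: orthogonal_def)
qed

lemma L3:
  assumes "\<forall>j\<in>J. c j \<noteq> 0" "\<sigma> \<subseteq> J"
    "x extreme_point_of {y\<in>Qs J lam eta c. \<forall>j\<in>\<sigma>. y \<bullet> lam j + eta j = 0}"
  shows "x extreme_point_of Qs J lam eta c"
  unfolding extreme_point_of_def
proof (intro conjI ballI notI)
  show "x \<in> Qs J lam eta c" using assms(3) by (auto simp: extreme_point_of_def)
  fix a b assume a: "a \<in> Qs J lam eta c" and b: "b \<in> Qs J lam eta c" and s: "x \<in> open_segment a b"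
  then obtain u where u: "a \<noteq> b" "0 < u" "u < 1" "x = (1 - u) *\<^sub>R a + u *\<^sub>R b"
    unfolding in_segment by auto
  have xG: "x \<in> {y\<in>Qs J lam eta c. \<forall>j\<in>\<sigma>. y \<bullet> lam j + eta j = 0}"
    using assms(3) by (simp add: extreme_point_of_def)
  have "a \<bullet> lam j + eta j = 0 \<and> b \<bullet> lam j + eta j = 0" if j: "j \<in> \<sigma>" for j
  proof -
    have jJ: "j \<in> J" using j assms(2) by blast
    have h1: "0 \<le> c j * (a \<bullet> lam j + eta j)" using a jJ by (simp add: Qs_def)
    have h2: "0 \<le> c j * (b \<bullet> lam j + eta j)" using b jJ by (simp add: Qs_def)
    have h3: "c j \<noteq> 0" using assms(1) jJ by blast
    have h4: "((1 - u) *\<^sub>R a + u *\<^sub>R b) \<bullet> lam j + eta j = 0" using xG j u(4) by simp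
    show ?thesis by (rule L0[OF h1 h2 h3 u(2) u(3) h4])
  qed
  hence "a \<in> {y\<in>Qs J lam eta c. \<forall>j\<in>\<sigma>. y \<bullet> lam j + eta j = 0}"
        "b \<in> {y\<in>Qs J lam eta c. \<forall>j\<in>\<sigma>. y \<bullet> lam j + eta j = 0}" using a b by auto
  thus False using assms(3) s by (auto simp: extreme_point_of_def)
qed




definition act :: "nat \<Rightarrow> (nat \<Rightarrow> 'a::euclidean_space) \<Rightarrow> (nat \<Rightarrow> real) \<Rightarrow> 'a \<Rightarrow> nat set" where
  "act m lam eta x = {j\<in>{0..m}. x \<bullet> lam j + eta j = 0}"

definition Aset :: "nat \<Rightarrow> (nat \<Rightarrow> 'a::euclidean_space) \<Rightarrow> (nat \<Rightarrow> real) \<Rightarrow> 'a \<Rightarrow> nat set" where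
  "Aset m lam eta x = {j\<in>{1..m}. x \<bullet> lam j + eta j = 0}"

lemma zero_split: "{0..m::nat} = insert 0 {1..m}" by auto

lemma Poly_Qs: "Poly m lam eta = Qs {1..m} lam eta (\<lambda>_. 1)" by (auto simp: Poly_def Qs_def)

lemma Half_Qs: "Half m lam eta s = Qs {0..m} lam eta (\<lambda>j. if j = 0 then s else 1)"
  unfolding Half_def Poly_def Qs_def zero_split by auto

lemma Half_Poly: "Half m lam eta s \<subseteq> Poly m lam eta" by (auto simp: Half_def)

lemma Hyp0_Half: "x \<in> Poly m lam eta \<Longrightarrow> x \<bullet> lam 0 + eta 0 = 0 \<Longrightarrow> x \<in> Half m lam eta t"
  by (auto simp: Half_def)

lemma face_eq: "{y\<in>Qs J lam eta c. \<forall>j\<in>\<sigma>. y \<bullet> lam j + eta j = 0} = Qs J lam eta c \<inter> (\<Inter>j\<in>\<sigma>. Hyp lam eta j)"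
  by (auto simp: Hyp_def)

lemma face_convex: "convex {y\<in>Qs J lam eta c. \<forall>j\<in>\<sigma>. y \<bullet> lam j + eta j = 0}"
  unfolding face_eq by (intro convex_Int Qs_convex convex_INT Hyp_convex)

lemma face_closed: "closed {y\<in>Qs J lam eta c. \<forall>j\<in>\<sigma>. y \<bullet> lam j + eta j = 0}"
  unfolding face_eq by (intro closed_Int Qs_closed closed_INT ballI Hyp_closed)

lemma sing_lemma:
  assumes "span (lam ` \<sigma>) = UNIV" "\<forall>j\<in>\<sigma>. x \<bullet> lam j + eta j = 0"
    "\<forall>j\<in>\<sigma>. y \<bullet> lam j + eta j = 0"
  shows "y = x"
proof -
  have "\<forall>v\<in>lam ` \<sigma>. orthogonal (y - x) v"
  proof
    fix v assume "v \<in> lam ` \<sigma>"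
    then obtain j where j: "j \<in> \<sigma>" "v = lam j" by auto
    have "y \<bullet> lam j = x \<bullet> lam j" using assms(2,3) j(1) by (metis add_right_cancel)
    thus "orthogonal (y - x) v" using j by (simp add: orthogonal_def inner_diff_left)
  qed
  hence orth: "\<And>v. v \<in> lam ` \<sigma> \<Longrightarrow> orthogonal (y - x) v" by blast
  have "orthogonal (y - x) (y - x)" by (rule orthogonal_to_span[where S="lam ` \<sigma>", OF _ orth]) (simp add: assms(1))
  thus ?thesis by (simp add: orthogonal_def)
qed

context
  fixes m :: nat and lam :: "nat \<Rightarrow> 'a::euclidean_space" and eta :: "nat \<Rightarrow> real"
  assumes SP: "simple_polytope m lam eta" and GC: "generic_cut m lam eta"
begin

lemma Poly_compact: "compact (Poly m lam eta)"
  using SP by (auto simp: simple_polytope_def intro: polytope_imp_compact)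

lemma Facet0_ne: obtains x0 where "x0 \<in> Poly m lam eta" "x0 \<bullet> lam 0 + eta 0 = 0"
  using GC by (auto simp: generic_cut_def Facet_def Hyp_def)

lemma Half_ne: "Half m lam eta s \<noteq> {}"
proof -
  obtain x0 where "x0 \<in> Poly m lam eta" "x0 \<bullet> lam 0 + eta 0 = 0" using Facet0_ne by blast
  thus ?thesis using Hyp0_Half by blast
qed

lemma K_half_char: "K_half m lam eta s = {\<sigma>. \<exists>x\<in>Half m lam eta s. \<sigma> \<subseteq> act m lam eta x}"
proof (intro set_eqI iffI)
  fix \<sigma> assume "\<sigma> \<in> K_half m lam eta s"
  hence "\<sigma> = {} \<or> (\<sigma> \<subseteq> {0..m} \<and> (\<Inter>i\<in>\<sigma>. Facet m lam eta i \<inter> Half m lam eta s) \<noteq> {})"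
    by (auto simp: K_half_def)
  thus "\<sigma> \<in> {\<sigma>. \<exists>x\<in>Half m lam eta s. \<sigma> \<subseteq> act m lam eta x}"
  proof
    assume "\<sigma> = {}" thus ?thesis using Half_ne by auto
  next
    assume h: "\<sigma> \<subseteq> {0..m} \<and> (\<Inter>i\<in>\<sigma>. Facet m lam eta i \<inter> Half m lam eta s) \<noteq> {}"
    show ?thesis
    proof (cases "\<sigma> = {}")
      case True thus ?thesis using Half_ne by auto
    next
      case False
      then obtain x where x: "x \<in> (\<Inter>i\<in>\<sigma>. Facet m lam eta i \<inter> Half m lam eta s)" using h by blast
      then have "x \<in> Half m lam eta s" using False by auto
      moreover have "\<forall>i\<in>\<sigma>. x \<in> Facet m lam eta i" using x by blast
      hence "\<sigma> \<subseteq> act m lam eta x" using h by (auto simp: act_def Facet_def Hyp_def)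
      ultimately show ?thesis by auto
    qed
  qed
next
  fix \<sigma> assume "\<sigma> \<in> {\<sigma>. \<exists>x\<in>Half m lam eta s. \<sigma> \<subseteq> act m lam eta x}"
  then obtain x where x: "x \<in> Half m lam eta s" "\<sigma> \<subseteq> act m lam eta x" by auto
  have xP: "x \<in> Poly m lam eta" using x(1) Half_Poly by blast
  have "x \<in> (\<Inter>i\<in>\<sigma>. Facet m lam eta i \<inter> Half m lam eta s)"
    using x xP by (auto simp: act_def Facet_def Hyp_def)
  moreover have "\<sigma> \<subseteq> {0..m}" using x by (auto simp: act_def)
  ultimately show "\<sigma> \<in> K_half m lam eta s" unfolding K_half_def by blast
qed

lemma K_Delta_char: "K_Delta m lam eta = {\<sigma>. \<sigma> \<subseteq> {1..m} \<and> (\<exists>x\<in>Poly m lam eta. \<sigma> \<subseteq> act m lam eta x)}"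
proof (intro set_eqI iffI)
  fix \<sigma> assume "\<sigma> \<in> K_Delta m lam eta"
  hence "\<sigma> = {} \<or> (\<sigma> \<subseteq> {1..m} \<and> (\<Inter>i\<in>\<sigma>. Facet m lam eta i) \<noteq> {})"
    by (auto simp: K_Delta_def)
  thus "\<sigma> \<in> {\<sigma>. \<sigma> \<subseteq> {1..m} \<and> (\<exists>x\<in>Poly m lam eta. \<sigma> \<subseteq> act m lam eta x)}"
  proof
    assume "\<sigma> = {}" thus ?thesis using Facet0_ne by auto
  next
    assume h: "\<sigma> \<subseteq> {1..m} \<and> (\<Inter>i\<in>\<sigma>. Facet m lam eta i) \<noteq> {}"
    show ?thesis
    proof (cases "\<sigma> = {}")
      case True thus ?thesis using Facet0_ne by auto
    next
      case False
      then obtain x where x: "x \<in> (\<Inter>i\<in>\<sigma>. Facet m lam eta i)" using h by blast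
      then have "x \<in> Poly m lam eta" using False by (auto simp: Facet_def)
      moreover have "\<forall>i\<in>\<sigma>. x \<in> Facet m lam eta i" using x by blast
      hence "\<sigma> \<subseteq> act m lam eta x" using h by (auto simp: act_def Facet_def Hyp_def)
      ultimately show ?thesis using h by auto
    qed
  qed
next
  fix \<sigma> assume "\<sigma> \<in> {\<sigma>. \<sigma> \<subseteq> {1..m} \<and> (\<exists>x\<in>Poly m lam eta. \<sigma> \<subseteq> act m lam eta x)}"
  then obtain x where x: "x \<in> Poly m lam eta" "\<sigma> \<subseteq> act m lam eta x" "\<sigma> \<subseteq> {1..m}" by auto
  have "x \<in> (\<Inter>i\<in>\<sigma>. Facet m lam eta i)"
    using x by (auto simp: act_def Facet_def Hyp_def)
  thus "\<sigma> \<in> K_Delta m lam eta" using x unfolding K_Delta_def by blast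
qed

lemma vert_card: "x extreme_point_of Poly m lam eta \<Longrightarrow> card (Aset m lam eta x) = DIM('a)"
proof -
  assume x: "x extreme_point_of Poly m lam eta"
  hence "card {i\<in>{1..m}. x \<in> Facet m lam eta i} = DIM('a)" using SP by (auto simp: simple_polytope_def)
  moreover have xP: "x \<in> Poly m lam eta" using x by (simp add: extreme_point_of_def)
  have "{i\<in>{1..m}. x \<in> Facet m lam eta i} = Aset m lam eta x"
    using xP unfolding Facet_def Hyp_def Aset_def by blast
  ultimately show ?thesis by simp
qed

lemma vert_span: "x extreme_point_of Poly m lam eta \<Longrightarrow> span (lam ` Aset m lam eta x) = UNIV"
proof -
  assume "x extreme_point_of Poly m lam eta"
  hence "x extreme_point_of Qs {1..m} lam eta (\<lambda>_. 1)" by (simp add: Poly_Qs)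
  from L1[OF finite_atLeastAtMost _ this] show ?thesis by (simp add: Aset_def)
qed

lemma gen_sing:
  assumes "\<sigma> \<subseteq> {1..m}" "span (lam ` \<sigma>) = UNIV" "\<forall>j\<in>\<sigma>. x \<bullet> lam j + eta j = 0"
  shows "x \<bullet> lam 0 + eta 0 \<noteq> 0"
proof
  assume h0: "x \<bullet> lam 0 + eta 0 = 0"
  have L: "(\<Inter>i\<in>\<sigma>. Hyp lam eta i) = {x}"
  proof (intro set_eqI iffI)
    fix y assume "y \<in> (\<Inter>i\<in>\<sigma>. Hyp lam eta i)"
    hence "\<forall>j\<in>\<sigma>. y \<bullet> lam j + eta j = 0" unfolding Hyp_def by blast
    thus "y \<in> {x}" using sing_lemma[OF assms(2,3)] by blast
  next
    fix y assume "y \<in> {x}" thus "y \<in> (\<Inter>i\<in>\<sigma>. Hyp lam eta i)" using assms(3) unfolding Hyp_def by blast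
  qed
  have "Hyp lam eta 0 \<inter> {x} = {x}" using h0 by (auto simp: Hyp_def)
  have "(\<Inter>i\<in>\<sigma>. Hyp lam eta i) \<noteq> {} \<longrightarrow> (Hyp lam eta 0 \<inter> (\<Inter>i\<in>\<sigma>. Hyp lam eta i) = {} \<or>
      aff_dim (Hyp lam eta 0 \<inter> (\<Inter>i\<in>\<sigma>. Hyp lam eta i)) = aff_dim (\<Inter>i\<in>\<sigma>. Hyp lam eta i) - 1)"
    using GC assms(1) unfolding generic_cut_def Let_def by blast
  thus False unfolding L using \<open>Hyp lam eta 0 \<inter> {x} = {x}\<close> by simp
qed

lemma vert_off: "x extreme_point_of Poly m lam eta \<Longrightarrow> x \<bullet> lam 0 + eta 0 \<noteq> 0"
proof -
  assume x: "x extreme_point_of Poly m lam eta"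
  show ?thesis by (rule gen_sing[OF _ vert_span[OF x]]) (unfold Aset_def, blast+)
qed

lemma face_compact:
  assumes "Qs J lam eta c \<subseteq> Poly m lam eta"
  shows "compact {y\<in>Qs J lam eta c. \<forall>j\<in>\<sigma>. y \<bullet> lam j + eta j = 0}"
proof -
  have "{y\<in>Qs J lam eta c. \<forall>j\<in>\<sigma>. y \<bullet> lam j + eta j = 0} =
     Poly m lam eta \<inter> {y\<in>Qs J lam eta c. \<forall>j\<in>\<sigma>. y \<bullet> lam j + eta j = 0}" (is "?A = ?B") using assms by auto
  show ?thesis by (subst \<open>?A = ?B\<close>) (rule compact_Int_closed[OF Poly_compact face_closed])
qed

lemma V:
  assumes "s \<noteq> 0" "x extreme_point_of Half m lam eta s"
  shows "card (act m lam eta x) = DIM('a)"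
proof -
  have xQ: "x extreme_point_of Qs {0..m} lam eta (\<lambda>j. if j = 0 then s else 1)"
    using assms(2) by (simp add: Half_Qs)
  have spanx: "span (lam ` act m lam eta x) = UNIV"
    unfolding act_def by (rule L1[OF finite_atLeastAtMost _ xQ]) (simp add: assms(1))
  have "x \<in> Half m lam eta s" using assms(2) by (simp add: extreme_point_of_def)
  hence xP: "x \<in> Poly m lam eta" using Half_Poly by blast
  show ?thesis
  proof (cases "x \<bullet> lam 0 + eta 0 = 0")
    case False
    hence eq: "act m lam eta x = Aset m lam eta x" by (auto simp: act_def Aset_def) (metis Suc_leI neq0_conv)
    have xQ1: "x \<in> Qs {1..m} lam eta (\<lambda>_. 1)" using xP by (simp add: Poly_Qs)
    have sp1: "span (lam ` {j\<in>{1..m}. x \<bullet> lam j + eta j = 0}) = UNIV"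
      using spanx eq by (simp add: Aset_def)
    have "x extreme_point_of Qs {1..m} lam eta (\<lambda>_. 1)"
      by (rule L2[OF _ xQ1 sp1]) simp
    hence "x extreme_point_of Poly m lam eta" by (simp add: Poly_Qs)
    thus ?thesis using eq vert_card by simp
  next
    case True
    have eq: "act m lam eta x = insert 0 (Aset m lam eta x)"
      using True unfolding act_def Aset_def by (auto simp: Suc_le_eq)
    have fin: "finite (Aset m lam eta x)" by (simp add: Aset_def)
    have n0: "0 \<notin> Aset m lam eta x" by (simp add: Aset_def)
    have c1: "card (act m lam eta x) = card (Aset m lam eta x) + 1"
      using eq fin n0 by simp
    have finA: "finite (act m lam eta x)" by (simp add: act_def)
    have "dim (UNIV::'a set) \<le> card (lam ` act m lam eta x)"
      by (rule dim_le_card) (simp_all add: spanx finA)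
    also have "\<dots> \<le> card (act m lam eta x)" by (rule card_image_le[OF finA])
    finally have lo: "DIM('a) \<le> card (act m lam eta x)" by simp
    let ?F = "{y\<in>Qs {1..m} lam eta (\<lambda>_. 1). \<forall>j\<in>Aset m lam eta x. y \<bullet> lam j + eta j = 0}"
    have xF: "x \<in> ?F" using xP unfolding Aset_def Poly_Qs by blast
    have cF: "compact ?F" by (rule face_compact) (simp add: Poly_Qs)
    have neF: "?F \<noteq> {}" using xF by blast
    obtain v where v: "v extreme_point_of ?F"
      using extreme_point_exists_convex[OF cF face_convex neF] by blast
    have sJ: "Aset m lam eta x \<subseteq> {1..m}" unfolding Aset_def by blast
    have "v extreme_point_of Qs {1..m} lam eta (\<lambda>_. 1)"
      by (rule L3[OF _ sJ v]) simp
    hence vP: "v extreme_point_of Poly m lam eta" by (simp add: Poly_Qs)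
    have vF: "v \<in> ?F" using v by (simp add: extreme_point_of_def)
    have sub: "Aset m lam eta x \<subseteq> Aset m lam eta v"
      using vF unfolding Aset_def by blast
    have cv: "card (Aset m lam eta v) = DIM('a)" using vP vert_card by simp
    have finv: "finite (Aset m lam eta v)" by (simp add: Aset_def)
    have "card (Aset m lam eta x) \<noteq> DIM('a)"
    proof
      assume "card (Aset m lam eta x) = DIM('a)"
      hence "Aset m lam eta x = Aset m lam eta v" using card_subset_eq[OF finv sub] cv by simp
      hence spA: "span (lam ` Aset m lam eta x) = UNIV" using vert_span[OF vP] by simp
      have "\<forall>j\<in>Aset m lam eta x. x \<bullet> lam j + eta j = 0" unfolding Aset_def by blast
      from gen_sing[OF sJ spA this] True show False by simp
    qed
    moreover have "card (Aset m lam eta x) \<le> DIM('a)" using card_mono[OF finv sub] cv by simp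
    ultimately show ?thesis using c1 lo by linarith
  qed
qed

end



lemma sc_O0: "sc_O K {{0}} = {\<sigma>\<in>K. (0::nat)\<in>\<sigma>}" by (auto simp: sc_O_def)

context
  fixes m :: nat and lam :: "nat \<Rightarrow> 'a::euclidean_space" and eta :: "nat \<Rightarrow> real"
  assumes SP: "simple_polytope m lam eta" and GC: "generic_cut m lam eta"
begin

lemma ext_above:
  assumes "s \<noteq> 0" "y \<in> Half m lam eta s" "\<sigma> \<subseteq> act m lam eta y"
  obtains x where "x extreme_point_of Half m lam eta s" "\<sigma> \<subseteq> act m lam eta x"
proof -
  let ?c = "\<lambda>j. if j = 0 then s else (1::real)"
  let ?F = "{z\<in>Qs {0..m} lam eta ?c. \<forall>j\<in>\<sigma>. z \<bullet> lam j + eta j = 0}"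
  have sig: "\<sigma> \<subseteq> {0..m}" using assms(3) unfolding act_def by blast
  have yQ: "y \<in> Qs {0..m} lam eta ?c" using assms(2) by (simp add: Half_Qs)
  have yF: "y \<in> ?F" using yQ assms(3) unfolding act_def by blast
  have sub: "Qs {0..m} lam eta ?c \<subseteq> Poly m lam eta" using Half_Poly[of m lam eta s] by (simp add: Half_Qs)
  have cF: "compact ?F" by (rule face_compact[OF SP GC sub])
  have neF: "?F \<noteq> {}" using yF by blast
  obtain x where x: "x extreme_point_of ?F"
    using extreme_point_exists_convex[OF cF face_convex neF] by blast
  have "x extreme_point_of Qs {0..m} lam eta ?c"
    by (rule L3[OF _ sig x]) (simp add: assms(1))
  hence "x extreme_point_of Half m lam eta s" by (simp add: Half_Qs)
  moreover have "x \<in> ?F" using x by (simp add: extreme_point_of_def)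
  hence "\<sigma> \<subseteq> act m lam eta x" using sig unfolding act_def by blast
  ultimately show ?thesis using that by blast
qed

lemma PK:
  assumes "s \<noteq> 0" "maximal_face (K_half m lam eta s) \<sigma>"
  shows "card \<sigma> = DIM('a)"
proof -
  have sK: "\<sigma> \<in> K_half m lam eta s" and nsup: "\<not> (\<exists>\<tau>\<in>K_half m lam eta s. \<sigma> \<subset> \<tau>)"
    using assms(2) unfolding maximal_face_def by blast+
  then obtain y where y: "y \<in> Half m lam eta s" "\<sigma> \<subseteq> act m lam eta y"
    unfolding K_half_char[OF SP GC] by blast
  obtain x where x: "x extreme_point_of Half m lam eta s" "\<sigma> \<subseteq> act m lam eta x"
    using ext_above[OF assms(1) y] by blast
  have xH: "x \<in> Half m lam eta s" using x(1) by (simp add: extreme_point_of_def)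
  have "act m lam eta x \<in> K_half m lam eta s"
    using xH unfolding K_half_char[OF SP GC] by blast
  hence "\<sigma> = act m lam eta x" using nsup x(2) by blast
  thus ?thesis using V[OF SP GC assms(1) x(1)] by simp
qed

lemma seg:
  assumes "y \<in> Half m lam eta 1" "z \<in> Half m lam eta (-1)" "\<sigma> \<subseteq> act m lam eta y" "\<sigma> \<subseteq> act m lam eta z"
  obtains w where "w \<in> Poly m lam eta" "w \<bullet> lam 0 + eta 0 = 0" "\<sigma> \<subseteq> act m lam eta w"
proof -
  define hy where "hy = y \<bullet> lam 0 + eta 0"
  define hz where "hz = z \<bullet> lam 0 + eta 0"
  have hy: "hy \<ge> 0" and hz: "hz \<le> 0" using assms(1,2) by (auto simp: Half_def hy_def hz_def)
  have yP: "y \<in> Poly m lam eta" and zP: "z \<in> Poly m lam eta" using assms(1,2) Half_Poly by blast+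
  show ?thesis
  proof (cases "hy = 0")
    case True thus ?thesis using that[OF yP _ assms(3)] hy_def by simp
  next
    case False
    hence hpos: "hy - hz > 0" using hy hz by linarith
    define t where "t = hy / (hy - hz)"
    have t0: "0 \<le> t" and t1: "t \<le> 1" using hy hz hpos by (auto simp: t_def divide_simps)
    define w where "w = (1 - t) *\<^sub>R y + t *\<^sub>R z"
    have "w \<in> Poly m lam eta" unfolding w_def Poly_Qs
      using yP zP t0 t1 by (intro convexD[OF Qs_convex]) (auto simp: Poly_Qs)
    moreover have "w \<bullet> lam 0 + eta 0 = 0"
    proof -
      have "w \<bullet> lam 0 + eta 0 = (1-t) * hy + t * hz" unfolding w_def affine_comb hy_def hz_def ..
      also have "\<dots> = hy - t * (hy - hz)" by (simp add: algebra_simps)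
      also have "\<dots> = 0" using hpos by (simp add: t_def)
      finally show ?thesis .
    qed
    moreover have "\<sigma> \<subseteq> act m lam eta w"
    proof
      fix j assume "j \<in> \<sigma>"
      hence "j \<in> {0..m}" "y \<bullet> lam j + eta j = 0" "z \<bullet> lam j + eta j = 0" using assms(3,4) by (auto simp: act_def)
      thus "j \<in> act m lam eta w" unfolding act_def w_def affine_comb by simp
    qed
    ultimately show ?thesis using that by blast
  qed
qed

lemma W_ins0:
  assumes "\<sigma> \<in> K_half m lam eta 1" "\<sigma> \<in> K_half m lam eta (-1)"
  shows "insert 0 \<sigma> \<in> K_half m lam eta t"
proof -
  obtain y z where "y \<in> Half m lam eta 1" "z \<in> Half m lam eta (-1)" "\<sigma> \<subseteq> act m lam eta y" "\<sigma> \<subseteq> act m lam eta z"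
    using assms by (auto simp: K_half_char[OF SP GC])
  then obtain w where w: "w \<in> Poly m lam eta" "w \<bullet> lam 0 + eta 0 = 0" "\<sigma> \<subseteq> act m lam eta w"
    using seg by blast
  have "w \<in> Half m lam eta t" using w Hyp0_Half by blast
  moreover have "insert 0 \<sigma> \<subseteq> act m lam eta w" using w by (auto simp: act_def)
  ultimately show ?thesis by (auto simp: K_half_char[OF SP GC])
qed

lemma PW:
  assumes "maximal_face (K_half m lam eta 1 \<inter> K_half m lam eta (-1)) \<sigma>"
  shows "card \<sigma> = DIM('a)"
proof -
  have sW: "\<sigma> \<in> K_half m lam eta 1 \<inter> K_half m lam eta (-1)"
    and nsup: "\<not> (\<exists>\<tau>\<in>K_half m lam eta 1 \<inter> K_half m lam eta (-1). \<sigma> \<subset> \<tau>)"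
    using assms unfolding maximal_face_def by blast+
  have s1: "\<sigma> \<in> K_half m lam eta 1" and s2: "\<sigma> \<in> K_half m lam eta (-1)" using sW by blast+
  have "insert 0 \<sigma> \<in> K_half m lam eta 1 \<inter> K_half m lam eta (-1)" using W_ins0[OF s1 s2] by blast
  hence z: "0 \<in> \<sigma>" using nsup by blast
  obtain y where y: "y \<in> Half m lam eta 1" "\<sigma> \<subseteq> act m lam eta y"
    using s1 unfolding K_half_char[OF SP GC] by blast
  obtain x where x: "x extreme_point_of Half m lam eta 1" "\<sigma> \<subseteq> act m lam eta x"
    using ext_above[OF one_neq_zero y] by blast
  have xH: "x \<in> Half m lam eta 1" using x(1) by (simp add: extreme_point_of_def)
  have h0: "x \<bullet> lam 0 + eta 0 = 0" using z x(2) unfolding act_def by blast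
  have xP: "x \<in> Poly m lam eta" using xH Half_Poly by blast
  have "\<forall>t. act m lam eta x \<in> K_half m lam eta t"
    using Hyp0_Half[OF xP h0] unfolding K_half_char[OF SP GC] by blast
  hence "act m lam eta x \<in> K_half m lam eta 1 \<inter> K_half m lam eta (-1)" by blast
  hence "\<sigma> = act m lam eta x" using nsup x(2) by blast
  thus ?thesis using V[OF SP GC _ x(1)] by simp
qed

end



context
  fixes m :: nat and lam :: "nat \<Rightarrow> 'a::euclidean_space" and eta :: "nat \<Rightarrow> real"
  assumes SP: "simple_polytope m lam eta" and GC: "generic_cut m lam eta"
begin

lemma zero_both:
  assumes "\<sigma> \<in> K_half m lam eta t" "0 \<in> \<sigma>"
  shows "\<sigma> \<in> K_half m lam eta t'"
proof -
  obtain x where x: "x \<in> Half m lam eta t" "\<sigma> \<subseteq> act m lam eta x"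
    using assms(1) by (auto simp: K_half_char[OF SP GC])
  have "x \<bullet> lam 0 + eta 0 = 0" using x(2) assms(2) by (auto simp: act_def)
  moreover have "x \<in> Poly m lam eta" using x(1) Half_Poly by blast
  ultimately have "x \<in> Half m lam eta t'" using Hyp0_Half by blast
  thus ?thesis using x(2) by (auto simp: K_half_char[OF SP GC])
qed

lemma SC: "simplicial_complex {0..m} (K_half m lam eta s)"
  unfolding simplicial_complex_def K_half_char[OF SP GC]
  using Half_ne[OF SP GC, of s] by (auto simp: act_def)

lemma Zlemma:
  assumes s: "s = 1 \<or> s = -1"
  shows "{\<sigma>\<in>K_half m lam eta s \<union> K_half m lam eta (-s). 0\<in>\<sigma>} =
    (K_half m lam eta s \<inter> K_half m lam eta (-s)) - sc_closure (K_half m lam eta s - (K_half m lam eta s \<inter> K_half m lam eta (-s)))"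
    (is "?L = ?W - sc_closure (?Kp - ?W)")
proof (intro set_eqI iffI)
  fix \<sigma> assume "\<sigma> \<in> ?L"
  hence z: "0 \<in> \<sigma>" and sW: "\<sigma> \<in> ?W" using zero_both by blast+
  have "\<sigma> \<notin> sc_closure (?Kp - ?W)"
  proof
    assume "\<sigma> \<in> sc_closure (?Kp - ?W)"
    then obtain \<tau> where "\<tau> \<in> ?Kp" "\<tau> \<notin> ?W" "\<sigma> \<subseteq> \<tau>" by (auto simp: sc_closure_def)
    thus False using z zero_both by blast
  qed
  thus "\<sigma> \<in> ?W - sc_closure (?Kp - ?W)" using sW by blast
next
  fix \<sigma> assume a: "\<sigma> \<in> ?W - sc_closure (?Kp - ?W)"
  have s0: "s \<noteq> 0" using s by auto
  have "0 \<in> \<sigma>"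
  proof (rule ccontr)
    assume n0: "0 \<notin> \<sigma>"
    obtain y where y: "y \<in> Half m lam eta s" "\<sigma> \<subseteq> act m lam eta y"
      using a by (auto simp: K_half_char[OF SP GC])
    have sig: "\<sigma> \<subseteq> {1..m}"
    proof
      fix j assume "j \<in> \<sigma>"
      hence "j \<noteq> 0" using n0 by (cases "j = 0") auto
      moreover have "j \<le> m" using \<open>j \<in> \<sigma>\<close> y(2) unfolding act_def by auto
      ultimately show "j \<in> {1..m}" by simp
    qed
    let ?F = "{z\<in>Qs {1..m} lam eta (\<lambda>_. 1). \<forall>j\<in>\<sigma>. z \<bullet> lam j + eta j = 0}"
    have yF: "y \<in> ?F" using y Half_Poly[of m lam eta s] by (auto simp: act_def Poly_Qs)
    have cF: "compact ?F" using face_compact[OF SP GC, of "{1..m}" "\<lambda>_. 1"] by (simp add: Poly_Qs)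
    have vF: "convex ?F" by (rule face_convex)
    have "\<exists>p. p extreme_point_of ?F \<and> s * (p \<bullet> lam 0 + eta 0) > 0"
    proof (rule ccontr)
      assume nex: "\<not> (\<exists>p. p extreme_point_of ?F \<and> s * (p \<bullet> lam 0 + eta 0) > 0)"
      have neg: "s * (p \<bullet> lam 0 + eta 0) < 0" if "p extreme_point_of ?F" for p
      proof -
        have "p extreme_point_of Poly m lam eta" unfolding Poly_Qs
          using that sig by (intro L3[of _ _ \<sigma>]) auto
        hence "p \<bullet> lam 0 + eta 0 \<noteq> 0" by (rule vert_off[OF SP GC])
        moreover have "\<not> s * (p \<bullet> lam 0 + eta 0) > 0" using nex that by blast
        ultimately show ?thesis using s0 by (metis mult_eq_0_iff linorder_neqE_linordered_idom)
      qed
      let ?H = "{v. (s *\<^sub>R lam 0) \<bullet> v < - (s * eta 0)}"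
      have Heq: "v \<in> ?H \<longleftrightarrow> s * (v \<bullet> lam 0 + eta 0) < 0" for v
        by (simp add: distrib_left inner_commute) linarith
      have "{p. p extreme_point_of ?F} \<subseteq> ?H" using neg Heq by blast
      hence "convex hull {p. p extreme_point_of ?F} \<subseteq> ?H"
        by (intro hull_minimal convex_halfspace_lt)
      hence "?F \<subseteq> ?H" using Krein_Milman_Minkowski[OF cF vF] by simp
      hence "s * (y \<bullet> lam 0 + eta 0) < 0" using yF Heq by blast
      thus False using y(1) by (auto simp: Half_def)
    qed
    then obtain p where p: "p extreme_point_of ?F" "s * (p \<bullet> lam 0 + eta 0) > 0" by blast
    have pP: "p extreme_point_of Poly m lam eta" unfolding Poly_Qs
      using p sig by (intro L3[of _ _ \<sigma>]) auto
    have pPoly: "p \<in> Poly m lam eta" using pP by (simp add: extreme_point_of_def)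
    have h0: "p \<bullet> lam 0 + eta 0 \<noteq> 0" using p(2) by auto
    have tau: "act m lam eta p = Aset m lam eta p" using h0 by (auto simp: act_def Aset_def) (metis Suc_leI neq0_conv)
    have sub: "\<sigma> \<subseteq> act m lam eta p" using p(1) sig by (auto simp: extreme_point_of_def act_def)
    have pH: "p \<in> Half m lam eta s" using pPoly p(2) by (auto simp: Half_def)
    hence inKp: "act m lam eta p \<in> ?Kp" by (auto simp: K_half_char[OF SP GC])
    have "act m lam eta p \<notin> K_half m lam eta (-s)"
    proof
      assume "act m lam eta p \<in> K_half m lam eta (-s)"
      then obtain q where q: "q \<in> Half m lam eta (-s)" "act m lam eta p \<subseteq> act m lam eta q"
        by (auto simp: K_half_char[OF SP GC])
      have "q = p"
      proof (rule sing_lemma[of lam "Aset m lam eta p"])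
        show "span (lam ` Aset m lam eta p) = UNIV" by (rule vert_span[OF SP GC pP])
        show "\<forall>j\<in>Aset m lam eta p. p \<bullet> lam j + eta j = 0" by (auto simp: Aset_def)
        show "\<forall>j\<in>Aset m lam eta p. q \<bullet> lam j + eta j = 0" using q(2) tau by (auto simp: act_def)
      qed
      thus False using q(1) p(2) by (auto simp: Half_def)
    qed
    hence "act m lam eta p \<in> ?Kp - ?W" using inKp by blast
    hence "\<sigma> \<in> sc_closure (?Kp - ?W)" using sub by (auto simp: sc_closure_def)
    thus False using a by blast
  qed
  thus "\<sigma> \<in> ?L" using a by blast
qed

lemma Poly_split: "Poly m lam eta = Half m lam eta 1 \<union> Half m lam eta (-1)"
  by (auto simp: Half_def)

end

theorem theorem3p9:
  fixes m :: nat and lam :: "nat \<Rightarrow> 'a::euclidean_space" and eta :: "nat \<Rightarrow> real"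
  assumes "simple_polytope m lam eta"
    and "generic_cut m lam eta"
  shows "strong_connected_sum {0..m} (K_half m lam eta 1)
           (sc_O (K_half m lam eta 1 \<union> K_half m lam eta (-1)) {{0}}) (K_half m lam eta (-1))
       \<and> K_Delta m lam eta = connected_sum (K_half m lam eta 1)
           (sc_O (K_half m lam eta 1 \<union> K_half m lam eta (-1)) {{0}}) (K_half m lam eta (-1))"
proof -
  note SP = assms(1) and GC = assms(2)
  define K1 where "K1 = K_half m lam eta 1"
  define K2 where "K2 = K_half m lam eta (-1)"
  have Zeq: "sc_O (K1 \<union> K2) {{0}} = {\<sigma>\<in>K1 \<union> K2. 0 \<in> \<sigma>}" by (rule sc_O0)
  have OZ: "sc_O (K1 \<union> K2) {\<sigma>\<in>K1 \<union> K2. 0 \<in> \<sigma>} = {\<sigma>\<in>K1 \<union> K2. 0 \<in> \<sigma>}"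
    by (auto simp: sc_O_def)
  have ZW: "{\<sigma>\<in>K1 \<union> K2. 0 \<in> \<sigma>} \<subseteq> K1 \<inter> K2"
    unfolding K1_def K2_def using zero_both[OF SP GC] by blast
  have csd: "connected_sum_defined {0..m} K1 {\<sigma>\<in>K1 \<union> K2. 0 \<in> \<sigma>} K2"
    unfolding connected_sum_defined_def OZ
    using SC[OF SP GC] ZW unfolding K1_def K2_def by blast
  have pure: "\<exists>d. pure_card K1 d \<and> pure_card K2 d \<and> pure_card (K1 \<inter> K2) d"
    unfolding pure_card_def K1_def K2_def using PK[OF SP GC one_neq_zero] PK[OF SP GC, of "-1"] PW[OF SP GC]
    by (intro exI[of _ "DIM('a)"]) auto
  have Z1: "{\<sigma>\<in>K1 \<union> K2. 0 \<in> \<sigma>} = (K1 \<inter> K2) - sc_closure (K1 - K1 \<inter> K2)"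
    using Zlemma[OF SP GC, of 1] unfolding K1_def K2_def by simp
  have Z2: "{\<sigma>\<in>K1 \<union> K2. 0 \<in> \<sigma>} = (K1 \<inter> K2) - sc_closure (K2 - K1 \<inter> K2)"
    using Zlemma[OF SP GC, of "-1"] unfolding K1_def K2_def by (simp add: Un_commute Int_commute)
  have part1: "strong_connected_sum {0..m} K1 {\<sigma>\<in>K1 \<union> K2. 0 \<in> \<sigma>} K2"
    unfolding strong_connected_sum_def Let_def using csd pure Z1 Z2 by blast
  have cs: "connected_sum K1 {\<sigma>\<in>K1 \<union> K2. 0 \<in> \<sigma>} K2 = {\<sigma>\<in>K1 \<union> K2. 0 \<notin> \<sigma>}"
    unfolding connected_sum_def sc_Del_def OZ by blast
  have part2: "K_Delta m lam eta = connected_sum K1 {\<sigma>\<in>K1 \<union> K2. 0 \<in> \<sigma>} K2"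
    unfolding cs
  proof (intro set_eqI iffI)
    fix \<sigma> assume "\<sigma> \<in> K_Delta m lam eta"
    then obtain x where x: "\<sigma> \<subseteq> {1..m}" "x \<in> Poly m lam eta" "\<sigma> \<subseteq> act m lam eta x"
      unfolding K_Delta_char[OF SP GC] by blast
    have "x \<in> Half m lam eta 1 \<or> x \<in> Half m lam eta (-1)" using x(2) Poly_split[OF SP GC] by blast
    hence "\<sigma> \<in> K1 \<union> K2" using x(3) unfolding K1_def K2_def K_half_char[OF SP GC] by blast
    moreover have "0 \<notin> \<sigma>" using x(1) by auto
    ultimately show "\<sigma> \<in> {\<sigma>\<in>K1 \<union> K2. 0 \<notin> \<sigma>}" by blast
  next
    fix \<sigma> assume a: "\<sigma> \<in> {\<sigma>\<in>K1 \<union> K2. 0 \<notin> \<sigma>}"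
    then obtain x where x: "x \<in> Half m lam eta 1 \<or> x \<in> Half m lam eta (-1)" "\<sigma> \<subseteq> act m lam eta x"
      unfolding K1_def K2_def K_half_char[OF SP GC] by blast
    have xP: "x \<in> Poly m lam eta" using x(1) Half_Poly by blast
    have "\<sigma> \<subseteq> {1..m}"
    proof
      fix j assume j: "j \<in> \<sigma>"
      have n0: "0 \<notin> \<sigma>" using a by blast
      hence "j \<noteq> 0" using j by (cases "j = 0") auto
      moreover have "j \<le> m" using j x(2) unfolding act_def by auto
      ultimately show "j \<in> {1..m}" by simp
    qed
    thus "\<sigma> \<in> K_Delta m lam eta" using xP x(2) unfolding K_Delta_char[OF SP GC] by blast
  qed
  show ?thesis using part1 part2 unfolding Zeq[unfolded K1_def K2_def] K1_def K2_def by simp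
qed


end
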